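(* Let $n\ge 3$ and $\mathbf h\in\mathbb{R}^{\binom{n+1}{2}}$, decomposed as $\mathbf h=(\mathbf h_0,\mathbf h_1,\mathbf h_2)$. Assume $J_{n,2}\mathbf h\ge 0$ and $\mathbf h_2\not\ge 0$. Then $R(J_{n,2}\mathbf h)\ge 3+R_{n-1,2}$.
   Context: For a real vector $\mathbf x$, $R(\mathbf x)$ is the number of nonzero components; inequalities are componentwise and $\mathbf x\not\ge0$ means some component is negative. $J_{m,j}$ is the matrix, with respect to the left lexicographic bases of degree-$j$ and degree-$(j+1)$ monomials in $m$ variables, of multiplication by the sum of the variables. If $\mathbf h$ is the coordinate vector of $A(x)=x_1^2A_0+x_1A_1(x_2,\dots,x_n)+A_2(x_2,\dots,x_n)$ ($A_j$ homogeneous of degree $j$), $\mathbf h_j$ is the coordinate vector of $A_j$ in the left lexicographic basis of degree-$j$ monomials in $x_2,\dots,x_n$. For $m,d\ge1$, $R_{m,d}:=\min\{R(J_{m,d}\mathbf g): \mathbf g\in\mathbb{R}^{\binom{m+d-1}{d}},\ \mathbf g\not\ge 0,\ J_{m,d}\mathbf g\ge 0\}$. *)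

theory Defs
  imports Complex_Main
begin

text \<open>Monomials of degree d in m variables x_1,...,x_m are represented by their
exponent vectors alpha :: nat => nat, where alpha i is the exponent of x_(i+1)
(indices 0..m-1) and alpha i = 0 for i >= m.  A coordinate vector with respect to the
monomial basis of degree d is a function from exponent vectors to reals, of which only
the values on monoms m d matter.  Since the number of nonzero entries and componentwise
sign conditions do not depend on the order of the basis, the left lexicographic order
is not needed explicitly.\<close>

definition monoms :: "nat \<Rightarrow> nat \<Rightarrow> (nat \<Rightarrow> nat) set" where
  "monoms m d = {\<alpha>. (\<forall>i\<ge>m. \<alpha> i = 0) \<and> (\<Sum>i<m. \<alpha> i) = d}"

text \<open>J m g: coefficients of (x_1 + ... + x_m) * G, where g are the coefficients of G.\<close>
definition Jmap :: "nat \<Rightarrow> ((nat \<Rightarrow> nat) \<Rightarrow> real) \<Rightarrow> (nat \<Rightarrow> nat) \<Rightarrow> real" where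
  "Jmap m g \<beta> = (\<Sum>i<m. if 0 < \<beta> i then g (\<beta>(i := \<beta> i - 1)) else 0)"

definition nonneg_on :: "(nat \<Rightarrow> nat) set \<Rightarrow> ((nat \<Rightarrow> nat) \<Rightarrow> real) \<Rightarrow> bool" where
  "nonneg_on S v \<longleftrightarrow> (\<forall>\<alpha>\<in>S. 0 \<le> v \<alpha>)"

definition Rcount :: "(nat \<Rightarrow> nat) set \<Rightarrow> ((nat \<Rightarrow> nat) \<Rightarrow> real) \<Rightarrow> nat" where
  "Rcount S v = card {\<alpha>\<in>S. v \<alpha> \<noteq> 0}"

definition Rmin :: "nat \<Rightarrow> nat \<Rightarrow> nat" where
  "Rmin m d = (LEAST r. \<exists>g. \<not> nonneg_on (monoms m d) g \<and> nonneg_on (monoms m (d+1)) (Jmap m g)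
      \<and> r = Rcount (monoms m (d+1)) (Jmap m g))"

end

theory Submission imports Defs "HOL-Library.FuncSet" begin

definition mon2 :: "nat \<Rightarrow> nat \<Rightarrow> nat \<Rightarrow> nat" where
  "mon2 a b = (\<lambda>t. (if t = a then 1 else 0) + (if t = b then 1 else 0))"
definition mon3 :: "nat \<Rightarrow> nat \<Rightarrow> nat \<Rightarrow> nat \<Rightarrow> nat" where
  "mon3 a b c = (\<lambda>t. (if t = a then 1 else 0) + (if t = b then 1 else 0) + (if t = c then 1 else 0))"

lemma Jmap_alt: "Jmap n h \<beta> = (\<Sum>i\<in>{i. i<n \<and> 0<\<beta> i}. h (\<beta>(i := \<beta> i - 1)))"
proof -
  have "{i. i<n \<and> 0<\<beta> i} = {i\<in>{..<n}. 0 < \<beta> i}" by auto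
  then show ?thesis unfolding Jmap_def
    by (simp add: sum.inter_filter[of "{..<n}", symmetric] del: One_nat_def)
qed

lemma mon2_comm: "mon2 a b = mon2 b a" unfolding mon2_def by auto

lemma J_aaa: "a < n \<Longrightarrow> Jmap n h (mon3 a a a) = h (mon2 a a)"
proof -
  assume a: "a < n"
  have "{i. i<n \<and> 0<mon3 a a a i} = {a}" using a by (auto simp: mon3_def)
  moreover have "(mon3 a a a)(a := mon3 a a a a - 1) = mon2 a a"
    by (auto simp: mon3_def mon2_def)
  ultimately show ?thesis by (simp add: Jmap_alt)
qed

lemma J_aab: "a < n \<Longrightarrow> b < n \<Longrightarrow> a \<noteq> b \<Longrightarrow> Jmap n h (mon3 a a b) = h (mon2 a b) + h (mon2 a a)"
proof -
  assume a: "a < n" "b < n" "a \<noteq> b"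
  have "{i. i<n \<and> 0<mon3 a a b i} = {a,b}" using a by (auto simp: mon3_def)
  moreover have "(mon3 a a b)(a := mon3 a a b a - 1) = mon2 a b"
    using a by (auto simp: mon3_def mon2_def)
  moreover have "(mon3 a a b)(b := mon3 a a b b - 1) = mon2 a a"
    using a by (auto simp: mon3_def mon2_def)
  ultimately show ?thesis using a by (simp add: Jmap_alt)
qed

lemma J_abc: "a < n \<Longrightarrow> b < n \<Longrightarrow> c < n \<Longrightarrow> a \<noteq> b \<Longrightarrow> a \<noteq> c \<Longrightarrow> b \<noteq> c \<Longrightarrow>
   Jmap n h (mon3 a b c) = h (mon2 b c) + h (mon2 a c) + h (mon2 a b)"
proof -
  assume a: "a < n" "b < n" "c < n" "a \<noteq> b" "a \<noteq> c" "b \<noteq> c"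
  have "{i. i<n \<and> 0<mon3 a b c i} = {a,b,c}" using a by (auto simp: mon3_def)
  moreover have "(mon3 a b c)(a := mon3 a b c a - 1) = mon2 b c"
    using a by (auto simp: mon3_def mon2_def)
  moreover have "(mon3 a b c)(b := mon3 a b c b - 1) = mon2 a c"
    using a by (auto simp: mon3_def mon2_def)
  moreover have "(mon3 a b c)(c := mon3 a b c c - 1) = mon2 a b"
    using a by (auto simp: mon3_def mon2_def)
  ultimately show ?thesis using a by (simp add: Jmap_alt)
qed

lemma mon3_in: "a < n \<Longrightarrow> b < n \<Longrightarrow> c < n \<Longrightarrow> mon3 a b c \<in> monoms n 3"
  unfolding monoms_def mon3_def by (simp add: sum.distrib)

lemma monoms_finite: "finite (monoms m d)"
proof -
  have "monoms m d \<subseteq> (\<lambda>f i. if i < m then f i else 0) ` (PiE {..<m} (\<lambda>_. {..d}))"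
  proof
    fix \<alpha> assume a: "\<alpha> \<in> monoms m d"
    have le: "\<alpha> i \<le> d" if "i < m" for i
    proof -
      have "\<alpha> i \<le> (\<Sum>i<m. \<alpha> i)" using that by (intro member_le_sum) auto
      then show ?thesis using a by (simp add: monoms_def)
    qed
    have "restrict \<alpha> {..<m} \<in> PiE {..<m} (\<lambda>_. {..d})" using le by auto
    moreover have "\<alpha> = (\<lambda>i. if i < m then restrict \<alpha> {..<m} i else 0)"
      using a by (auto simp: monoms_def)
    ultimately show "\<alpha> \<in> (\<lambda>f i. if i < m then f i else 0) ` (PiE {..<m} (\<lambda>_. {..d}))" by blast
  qed
  moreover have "finite (PiE {..<m} (\<lambda>_. {..d::nat}))" by (intro finite_PiE) auto
  ultimately show ?thesis using finite_surj by blast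
qed

lemma monoms2_decomp:
  assumes "\<alpha> \<in> monoms n 2" shows "\<exists>a b. a < n \<and> b < n \<and> \<alpha> = mon2 a b"
proof -
  have z: "\<forall>i\<ge>n. \<alpha> i = 0" and s: "(\<Sum>i<n. \<alpha> i) = 2" using assms by (auto simp: monoms_def)
  obtain a where a: "a < n" "0 < \<alpha> a"
    using s by (metis (mono_tags, lifting) lessThan_iff not_gr0 sum.neutral zero_neq_numeral)
  define \<alpha>1 where "\<alpha>1 = \<alpha>(a := \<alpha> a - 1)"
  have s1: "(\<Sum>i<n. \<alpha>1 i) = 1"
  proof -
    have "(\<Sum>i<n. \<alpha> i) = \<alpha> a + (\<Sum>i\<in>{..<n}-{a}. \<alpha> i)" using a by (simp add: sum.remove)
    moreover have "(\<Sum>i<n. \<alpha>1 i) = \<alpha>1 a + (\<Sum>i\<in>{..<n}-{a}. \<alpha>1 i)" using a by (simp add: sum.remove)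
    moreover have "(\<Sum>i\<in>{..<n}-{a}. \<alpha>1 i) = (\<Sum>i\<in>{..<n}-{a}. \<alpha> i)" by (simp add: \<alpha>1_def)
    moreover have "\<alpha>1 a = \<alpha> a - 1" by (simp add: \<alpha>1_def)
    ultimately show ?thesis using s a by arith
  qed
  obtain b where b: "b < n" "0 < \<alpha>1 b"
    using s1 by (metis (mono_tags, lifting) lessThan_iff not_gr0 sum.neutral zero_neq_one)
  define \<alpha>2 where "\<alpha>2 = \<alpha>1(b := \<alpha>1 b - 1)"
  have s2: "(\<Sum>i<n. \<alpha>2 i) = 0"
  proof -
    have "(\<Sum>i<n. \<alpha>1 i) = \<alpha>1 b + (\<Sum>i\<in>{..<n}-{b}. \<alpha>1 i)" using b by (simp add: sum.remove)
    moreover have "(\<Sum>i<n. \<alpha>2 i) = \<alpha>2 b + (\<Sum>i\<in>{..<n}-{b}. \<alpha>2 i)" using b by (simp add: sum.remove)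
    moreover have "(\<Sum>i\<in>{..<n}-{b}. \<alpha>2 i) = (\<Sum>i\<in>{..<n}-{b}. \<alpha>1 i)" by (simp add: \<alpha>2_def)
    moreover have "\<alpha>2 b = \<alpha>1 b - 1" by (simp add: \<alpha>2_def)
    ultimately show ?thesis using s1 b by arith
  qed
  have "\<forall>i. \<alpha>2 i = 0"
  proof
    fix i show "\<alpha>2 i = 0"
    proof (cases "i < n")
      case True then show ?thesis using s2 by simp
    next
      case False then show ?thesis using z a b by (auto simp: \<alpha>2_def \<alpha>1_def)
    qed
  qed
  then have "\<alpha> = mon2 a b"
  proof (intro ext)
    fix i
    have h2: "\<alpha>2 i = 0" using \<open>\<forall>i. \<alpha>2 i = 0\<close> by simp
    show "\<alpha> i = mon2 a b i"
    proof (cases "i = a")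
      case True
      then show ?thesis using h2 a b by (cases "b = a") (auto simp: mon2_def \<alpha>2_def \<alpha>1_def)
    next
      case False
      then show ?thesis using h2 a b by (cases "b = i") (auto simp: mon2_def \<alpha>2_def \<alpha>1_def)
    qed
  qed
  then show ?thesis using a b by blast
qed


definition sh :: "(nat \<Rightarrow> nat) \<Rightarrow> nat \<Rightarrow> nat" where
  "sh \<beta> = (\<lambda>i. case i of 0 \<Rightarrow> 0 | Suc j \<Rightarrow> \<beta> j)"

lemma sh_0: "sh \<beta> 0 = 0" and sh_Suc: "sh \<beta> (Suc i) = \<beta> i" by (simp_all add: sh_def)

lemma sh_mem: "\<beta> \<in> monoms m d \<Longrightarrow> sh \<beta> \<in> monoms (Suc m) d"
proof -
  assume a: "\<beta> \<in> monoms m d"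
  have "(\<Sum>i<Suc m. sh \<beta> i) = sh \<beta> 0 + (\<Sum>i<m. sh \<beta> (Suc i))" by (rule sum.lessThan_Suc_shift)
  then have s: "(\<Sum>i<Suc m. sh \<beta> i) = d" using a by (simp add: sh_0 sh_Suc monoms_def del: sum.lessThan_Suc)
  have z: "sh \<beta> i = 0" if hi: "Suc m \<le> i" for i
  proof -
    obtain j where "i = Suc j" "m \<le> j" using hi by (cases i) auto
    then show ?thesis using a by (simp add: sh_Suc monoms_def)
  qed
  show ?thesis unfolding monoms_def using s z by blast
qed

lemma unsh: "\<alpha> 0 = 0 \<Longrightarrow> sh (\<lambda>i. \<alpha> (Suc i)) = \<alpha>"
  unfolding sh_def by (rule ext) (simp split: nat.split)

lemma unsh_mem: "\<alpha> \<in> monoms (Suc m) d \<Longrightarrow> \<alpha> 0 = 0 \<Longrightarrow> (\<lambda>i. \<alpha> (Suc i)) \<in> monoms m d"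
proof -
  assume a: "\<alpha> \<in> monoms (Suc m) d" "\<alpha> 0 = 0"
  have "(\<Sum>i<Suc m. \<alpha> i) = \<alpha> 0 + (\<Sum>i<m. \<alpha> (Suc i))" by (rule sum.lessThan_Suc_shift)
  then show ?thesis using a unfolding monoms_def by (auto simp del: sum.lessThan_Suc)
qed

lemma sh_inj: "inj sh"
proof
  fix x y assume "sh x = sh y"
  then have "\<And>i. sh x (Suc i) = sh y (Suc i)" by simp
  then show "x = y" by (intro ext) (simp add: sh_Suc)
qed

lemma sh_J: "Jmap (Suc m) h (sh \<beta>) = Jmap m (h \<circ> sh) \<beta>"
proof -
  have upd: "(sh \<beta>)(Suc i := x) = sh (\<beta>(i := x))" for i x
    by (rule ext) (simp add: sh_def split: nat.split)
  have upd2: "(sh \<beta>)(Suc i := sh \<beta> (Suc i) - 1) = sh (\<beta>(i := \<beta> i - 1))" for i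
    by (rule ext) (simp add: sh_def split: nat.split)
  have s0: "sh \<beta> 0 = 0" and sS: "\<And>i. sh \<beta> (Suc i) = \<beta> i" by (auto simp: sh_def)
  show ?thesis unfolding Jmap_def
    apply (subst sum.lessThan_Suc_shift)
    apply (simp only: upd2 s0)
    apply (simp add: sS del: sum.lessThan_Suc)
    apply (rule sum.cong, rule refl)
    apply (simp only: comp_apply)
    done
qed

lemma three:
  assumes nn: "nonneg_on (monoms n 3) (Jmap n h)"
    and jk: "j < n" "k < n" "j \<noteq> k" "j \<noteq> 0" "k \<noteq> 0"
    and h0j: "h (mon2 0 j) > 0" and h00: "h (mon2 0 0) \<ge> 0"
    and hjj: "h (mon2 j j) > 0" and hkk: "h (mon2 k k) > 0"
  shows "3 \<le> card {\<beta>\<in>monoms n 3. 0 < \<beta> 0 \<and> Jmap n h \<beta> \<noteq> 0}"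
proof -
  let ?S = "{\<beta>\<in>monoms n 3. 0 < \<beta> 0 \<and> Jmap n h \<beta> \<noteq> 0}"
  have fin: "finite ?S" using monoms_finite by simp
  have n0: "0 < n" using jk by simp
  have J1: "Jmap n h (mon3 0 0 j) = h (mon2 0 j) + h (mon2 0 0)" using J_aab[of 0 n j h] jk n0 by simp
  have J2: "Jmap n h (mon3 j j 0) = h (mon2 j 0) + h (mon2 j j)" using J_aab[of j n 0 h] jk n0 by simp
  have m1: "mon3 0 0 j \<in> ?S" using J1 h0j h00 jk n0 mon3_in[of 0 n 0 j] by (simp add: mon3_def)
  have m2: "mon3 j j 0 \<in> ?S" using J2 h0j hjj jk n0 mon3_in[of j n j 0] mon2_comm[of j 0]
    by (simp add: mon3_def)
  have d12: "mon3 0 0 j \<noteq> mon3 j j 0"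
  proof
    assume "mon3 0 0 j = mon3 j j 0"
    then have "mon3 0 0 j 0 = mon3 j j 0 0" by simp
    then show False using jk by (simp add: mon3_def)
  qed
  show ?thesis
  proof (cases "h (mon2 0 0) > 0")
    case True
    have J3: "Jmap n h (mon3 0 0 0) = h (mon2 0 0)" using J_aaa[of 0 n h] n0 by simp
    have m3: "mon3 0 0 0 \<in> ?S" using J3 True n0 mon3_in[of 0 n 0 0] by (simp add: mon3_def)
    have d13: "mon3 0 0 j \<noteq> mon3 0 0 0"
    proof
      assume "mon3 0 0 j = mon3 0 0 0"
      then have "mon3 0 0 j j = mon3 0 0 0 j" by simp
      then show False using jk by (simp add: mon3_def)
    qed
    have d23: "mon3 j j 0 \<noteq> mon3 0 0 0"
    proof
      assume "mon3 j j 0 = mon3 0 0 0"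
      then have "mon3 j j 0 j = mon3 0 0 0 j" by simp
      then show False using jk by (simp add: mon3_def)
    qed
    have "card {mon3 0 0 j, mon3 j j 0, mon3 0 0 0} \<le> card ?S"
      using m1 m2 m3 fin by (intro card_mono) auto
    then show ?thesis using d12 d13 d23 by simp
  next
    case False
    then have z: "h (mon2 0 0) = 0" using h00 by simp
    have J4: "Jmap n h (mon3 0 0 k) = h (mon2 0 k) + h (mon2 0 0)" using J_aab[of 0 n k h] jk n0 by simp
    have "Jmap n h (mon3 0 0 k) \<ge> 0" using nn mon3_in[of 0 n 0 k] jk n0 by (simp add: nonneg_on_def)
    then have h0k: "h (mon2 0 k) \<ge> 0" using J4 z by simp
    have J5: "Jmap n h (mon3 k k 0) = h (mon2 k 0) + h (mon2 k k)" using J_aab[of k n 0 h] jk n0 by simp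
    have m3: "mon3 k k 0 \<in> ?S" using J5 h0k hkk jk n0 mon3_in[of k n k 0] mon2_comm[of k 0]
      by (simp add: mon3_def)
    have d13: "mon3 0 0 j \<noteq> mon3 k k 0"
    proof
      assume "mon3 0 0 j = mon3 k k 0"
      then have "mon3 0 0 j 0 = mon3 k k 0 0" by simp
      then show False using jk by (simp add: mon3_def)
    qed
    have d23: "mon3 j j 0 \<noteq> mon3 k k 0"
    proof
      assume "mon3 j j 0 = mon3 k k 0"
      then have "mon3 j j 0 j = mon3 k k 0 j" by simp
      then show False using jk by (simp add: mon3_def)
    qed
    have "card {mon3 0 0 j, mon3 j j 0, mon3 k k 0} \<le> card ?S"
      using m1 m2 m3 fin by (intro card_mono) auto
    then show ?thesis using d12 d13 d23 by simp
  qed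
qed


theorem corollary4p2:
  fixes n :: nat and h :: "(nat \<Rightarrow> nat) \<Rightarrow> real"
  assumes "3 \<le> n"
    and "nonneg_on (monoms n 3) (Jmap n h)"
    and "\<not> nonneg_on {\<alpha>\<in>monoms n 2. \<alpha> 0 = 0} h"
  shows "3 + Rmin (n - 1) 2 \<le> Rcount (monoms n 3) (Jmap n h)"
proof -
  obtain m where nm: "n = Suc m" using assms(1) by (cases n) auto
  have P: "\<And>\<beta>. \<beta> \<in> monoms n 3 \<Longrightarrow> 0 \<le> Jmap n h \<beta>" using assms(2) by (simp add: nonneg_on_def)
  obtain \<alpha> where \<alpha>: "\<alpha> \<in> monoms n 2" "\<alpha> 0 = 0" "h \<alpha> < 0"
    using assms(3) by (auto simp: nonneg_on_def not_le)
  obtain j k where jk: "j < n" "k < n" "\<alpha> = mon2 j k" using monoms2_decomp[OF \<alpha>(1)] by blast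
  have j0: "j \<noteq> 0" "k \<noteq> 0" using \<alpha>(2) jk(3) by (auto simp: mon2_def split: if_splits)
  have n0: "0 < n" using jk by simp
  have "j \<noteq> k"
  proof
    assume "j = k"
    then have "Jmap n h (mon3 j j j) = h \<alpha>" using J_aaa[of j n h] jk by simp
    then show False using P[OF mon3_in[of j n j j]] jk \<alpha>(3) by simp
  qed
  have hjj: "h (mon2 j j) > 0"
    using J_aab[of j n k h] P[OF mon3_in[of j n j k]] jk \<alpha>(3) \<open>j \<noteq> k\<close> by simp
  have hkk: "h (mon2 k k) > 0"
    using J_aab[of k n j h] P[OF mon3_in[of k n k j]] jk \<alpha>(3) \<open>j \<noteq> k\<close> mon2_comm[of k j] by simp
  have h00: "h (mon2 0 0) \<ge> 0"
    using J_aaa[of 0 n h] P[OF mon3_in[of 0 n 0 0]] n0 by simp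
  have "h (mon2 0 j) + h (mon2 0 k) > 0"
    using J_abc[of 0 n j k h] P[OF mon3_in[of 0 n j k]] jk \<alpha>(3) \<open>j \<noteq> k\<close> j0 n0 by simp
  then have "h (mon2 0 j) > 0 \<or> h (mon2 0 k) > 0" by linarith
  then have B3: "3 \<le> card {\<beta>\<in>monoms n 3. 0 < \<beta> 0 \<and> Jmap n h \<beta> \<noteq> 0}"
  proof
    assume "h (mon2 0 j) > 0"
    then show ?thesis using three[OF assms(2) jk(1,2) \<open>j \<noteq> k\<close> j0] h00 hjj hkk by blast
  next
    assume "h (mon2 0 k) > 0"
    then show ?thesis using three[OF assms(2) jk(2,1) not_sym[OF \<open>j \<noteq> k\<close>] j0(2,1)] h00 hjj hkk by blast
  qed
  define g where "g = h \<circ> sh"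
  define X where "X = {\<beta>\<in>monoms m 3. Jmap m g \<beta> \<noteq> 0}"
  define A where "A = {\<beta>\<in>monoms n 3. \<beta> 0 = 0 \<and> Jmap n h \<beta> \<noteq> 0}"
  define B where "B = {\<beta>\<in>monoms n 3. 0 < \<beta> 0 \<and> Jmap n h \<beta> \<noteq> 0}"
  have Jg: "Jmap m g \<beta> = Jmap n h (sh \<beta>)" for \<beta> using sh_J[of m h \<beta>] nm g_def by simp
  have sh0: "sh \<beta> 0 = 0" for \<beta> by (simp add: sh_def)
  have F1: "\<not> nonneg_on (monoms m 2) g"
  proof -
    have "(\<lambda>i. \<alpha> (Suc i)) \<in> monoms m 2" using unsh_mem[of \<alpha> m 2] \<alpha> nm by simp
    moreover have "g (\<lambda>i. \<alpha> (Suc i)) < 0" using unsh[of \<alpha>, OF \<alpha>(2)] \<alpha>(3) by (simp add: g_def)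
    ultimately show ?thesis by (auto simp: nonneg_on_def not_le)
  qed
  moreover have F2: "nonneg_on (monoms m 3) (Jmap m g)"
    using P sh_mem[of _ m 3] nm by (auto simp: nonneg_on_def Jg)
  ultimately have R1: "Rmin m 2 \<le> card X"
  proof -
    have e: "monoms m (2+1) = monoms m 3" by simp
    show ?thesis unfolding Rmin_def X_def Rcount_def e
      by (rule Least_le, rule exI[of _ g]) (use F1 F2 in simp)
  qed
  have "sh ` X = A"
  proof
    show "sh ` X \<subseteq> A"
    proof
      fix \<gamma> assume "\<gamma> \<in> sh ` X"
      then obtain \<beta> where b: "\<beta> \<in> X" "\<gamma> = sh \<beta>" by blast
      have "sh \<beta> \<in> monoms n 3" using sh_mem[of \<beta> m 3] b(1) nm by (simp add: X_def)
      moreover have "Jmap n h (sh \<beta>) \<noteq> 0" using b(1) Jg[of \<beta>] by (simp add: X_def)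
      ultimately show "\<gamma> \<in> A" using b(2) sh0[of \<beta>] by (simp add: A_def)
    qed
  next
    show "A \<subseteq> sh ` X"
    proof
      fix \<beta> assume b: "\<beta> \<in> A"
      then have "\<beta> = sh (\<lambda>i. \<beta> (Suc i))" using unsh[of \<beta>] by (simp add: A_def)
      moreover have "(\<lambda>i. \<beta> (Suc i)) \<in> X"
      proof -
        have "(\<lambda>i. \<beta> (Suc i)) \<in> monoms m 3" using b unsh_mem[of \<beta> m 3] nm by (simp add: A_def)
        moreover have "Jmap m g (\<lambda>i. \<beta> (Suc i)) \<noteq> 0"
          using Jg[of "\<lambda>i. \<beta> (Suc i)"] b \<open>\<beta> = sh (\<lambda>i. \<beta> (Suc i))\<close> by (simp add: A_def)
        ultimately show ?thesis by (simp add: X_def)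
      qed
      ultimately show "\<beta> \<in> sh ` X" by blast
    qed
  qed
  then have cA: "card A = card X" using card_image[OF inj_on_subset[OF sh_inj, of X]] by simp
  have U: "{\<beta>\<in>monoms n 3. Jmap n h \<beta> \<noteq> 0} = A \<union> B" unfolding A_def B_def by auto
  have fA: "finite A" by (rule finite_subset[OF _ monoms_finite[of n 3]]) (auto simp: A_def)
  have fB: "finite B" by (rule finite_subset[OF _ monoms_finite[of n 3]]) (auto simp: B_def)
  have D: "A \<inter> B = {}" unfolding A_def B_def by auto
  have "Rcount (monoms n 3) (Jmap n h) = card (A \<union> B)" unfolding Rcount_def U ..
  also have "\<dots> = card A + card B" by (rule card_Un_disjoint[OF fA fB D])
  finally have RC: "Rcount (monoms n 3) (Jmap n h) = card A + card B" .
  have nm1: "n - 1 = m" using nm by simp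
  show ?thesis unfolding RC nm1 using R1 cA B3[folded B_def] by linarith
qed

end
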